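(* Let $T$ be a finite set of students and $S$ a finite set of schools, each school having capacity $q\ge 1$, with $|T|\le q|S|$. Each student $t$ has a strict preference order $\succ_t$ over $S$ (every school is preferred to being unmatched), and each school $s$ has a strict priority order $\rhd_s$ over $T$. Let $\mu^\Omega$ denote the student-optimal stable matching of the whole market $T\cup S$. Let $\mathcal{D}'=\{D'_1,\dots,D'_{r'}\}$ be a partition of $T\cup S$ into parts $D'_i$, each containing at least one student and at least one school, with $T^{D'_i}=T\cap D'_i$ and $S^{D'_i}=S\cap D'_i$, such that for every $i\in\{1,\dots,r'\}$: if $t\in T^{D'_i}$ and $\mu^\Omega(t)=s$ for a school $s$, then $s\in S^{D'_i}$. For each $i$, let $\mu^{D'_i}$ denote the student-optimal stable matching of the sub-market consisting of the students $T^{D'_i}$ and schools $S^{D'_i}$ (with the preferences and priorities restricted to this sub-market), and for $t\in T^{D'_i}$ write $\mu^{D'}(t)=\mu^{D'_i}(t)$. Then for every student $t\in T$, $\mu^{D'}(t)\succcurlyeq_t \mu^\Omega(t)$, where $a\succcurlyeq_t b$ means $a\succ_t b$ or $a=b$.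
   Context: A matching of a population with students $T^P$ and schools $S^P$ is a correspondence $\mu$ with $\mu(t)\in S^P\cup\{t\}$ for each student ($\mu(t)=t$ meaning unmatched), $\mu(s)\subseteq T^P$ with $|\mu(s)|\le q$, and $\mu(t)=s$ iff $t\in\mu(s)$. Each school's choice rule is responsive to its priority order (it admits its highest-priority applicants up to capacity). A matching is stable if there is no pair $(t,s)$ with either (i) $\mu(t)=t$ and $|\mu(s)|<q$, or (ii) $s\succ_t\mu(t)$ and $t\rhd_s t'$ for some $t'\in\mu(s)$. The student-optimal stable matching is the stable matching that every student weakly prefers to every other stable matching (it exists and is computed by student-proposing deferred acceptance). *)

theory Defs
  imports Main
begin

text \<open>Students have type 'a, schools have type 'b.  A matching is a function
  mu :: 'a => 'b option; mu t = None means that t is unmatched (mu(t) = t).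
  P t s s' means that student t strictly prefers school s to school s'.
  Pr s t t' means that t has strictly higher priority than t' at school s.\<close>

definition strict_total_on :: "'c set \<Rightarrow> ('c \<Rightarrow> 'c \<Rightarrow> bool) \<Rightarrow> bool" where
  "strict_total_on A R \<longleftrightarrow>
     (\<forall>x\<in>A. \<not> R x x) \<and>
     (\<forall>x\<in>A. \<forall>y\<in>A. \<forall>z\<in>A. R x y \<longrightarrow> R y z \<longrightarrow> R x z) \<and>
     (\<forall>x\<in>A. \<forall>y\<in>A. x \<noteq> y \<longrightarrow> R x y \<or> R y x)"

definition assigned :: "'a set \<Rightarrow> ('a \<Rightarrow> 'b option) \<Rightarrow> 'b \<Rightarrow> 'a set" where
  "assigned Tp mu s = {t \<in> Tp. mu t = Some s}"

fun prefers :: "('a \<Rightarrow> 'b \<Rightarrow> 'b \<Rightarrow> bool) \<Rightarrow> 'a \<Rightarrow> 'b option \<Rightarrow> 'b option \<Rightarrow> bool" where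
  "prefers P t (Some s) (Some s') = P t s s'"
| "prefers P t (Some s) None = True"
| "prefers P t None _ = False"

definition weakly_prefers :: "('a \<Rightarrow> 'b \<Rightarrow> 'b \<Rightarrow> bool) \<Rightarrow> 'a \<Rightarrow> 'b option \<Rightarrow> 'b option \<Rightarrow> bool" where
  "weakly_prefers P t x y \<longleftrightarrow> prefers P t x y \<or> x = y"

definition is_matching :: "nat \<Rightarrow> 'a set \<Rightarrow> 'b set \<Rightarrow> ('a \<Rightarrow> 'b option) \<Rightarrow> bool" where
  "is_matching q Tp Sp mu \<longleftrightarrow>
     (\<forall>t\<in>Tp. mu t = None \<or> (\<exists>s\<in>Sp. mu t = Some s)) \<and>
     (\<forall>t. t \<notin> Tp \<longrightarrow> mu t = None) \<and>
     (\<forall>s\<in>Sp. card (assigned Tp mu s) \<le> q)"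

definition stable :: "nat \<Rightarrow> ('a \<Rightarrow> 'b \<Rightarrow> 'b \<Rightarrow> bool) \<Rightarrow> ('b \<Rightarrow> 'a \<Rightarrow> 'a \<Rightarrow> bool)
    \<Rightarrow> 'a set \<Rightarrow> 'b set \<Rightarrow> ('a \<Rightarrow> 'b option) \<Rightarrow> bool" where
  "stable q P Pr Tp Sp mu \<longleftrightarrow>
     is_matching q Tp Sp mu \<and>
     (\<nexists>t s. t \<in> Tp \<and> s \<in> Sp \<and>
        ((mu t = None \<and> card (assigned Tp mu s) < q) \<or>
         (prefers P t (Some s) (mu t) \<and> (\<exists>t'\<in>assigned Tp mu s. Pr s t t'))))"

definition student_optimal_stable :: "nat \<Rightarrow> ('a \<Rightarrow> 'b \<Rightarrow> 'b \<Rightarrow> bool) \<Rightarrow> ('b \<Rightarrow> 'a \<Rightarrow> 'a \<Rightarrow> bool)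
    \<Rightarrow> 'a set \<Rightarrow> 'b set \<Rightarrow> ('a \<Rightarrow> 'b option) \<Rightarrow> bool" where
  "student_optimal_stable q P Pr Tp Sp mu \<longleftrightarrow>
     stable q P Pr Tp Sp mu \<and>
     (\<forall>nu. stable q P Pr Tp Sp nu \<longrightarrow> (\<forall>t\<in>Tp. weakly_prefers P t (mu t) (nu t)))"

end

theory Submission
  imports Defs
begin

theorem proposition1:
  fixes T :: "'a set" and S :: "'b set" and q :: nat
    and P :: "'a \<Rightarrow> 'b \<Rightarrow> 'b \<Rightarrow> bool" and Pr :: "'b \<Rightarrow> 'a \<Rightarrow> 'a \<Rightarrow> bool"
    and muO :: "'a \<Rightarrow> 'b option"
    and r :: nat and TD :: "nat \<Rightarrow> 'a set" and SD :: "nat \<Rightarrow> 'b set"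
    and muD :: "nat \<Rightarrow> 'a \<Rightarrow> 'b option"
  assumes finT: "finite T" and finS: "finite S"
    and q_pos: "q \<ge> 1" and size: "card T \<le> q * card S"
    and prefs: "\<forall>t\<in>T. strict_total_on S (P t)"
    and prios: "\<forall>s\<in>S. strict_total_on T (Pr s)"
    and optO: "student_optimal_stable q P Pr T S muO"
    and partT: "(\<Union>i<r. TD i) = T" and partS: "(\<Union>i<r. SD i) = S"
    and disjT: "\<forall>i<r. \<forall>j<r. i \<noteq> j \<longrightarrow> TD i \<inter> TD j = {}"
    and disjS: "\<forall>i<r. \<forall>j<r. i \<noteq> j \<longrightarrow> SD i \<inter> SD j = {}"
    and nonemptyT: "\<forall>i<r. TD i \<noteq> {}" and nonemptyS: "\<forall>i<r. SD i \<noteq> {}"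
    and closed: "\<forall>i<r. \<forall>t\<in>TD i. \<forall>s. muO t = Some s \<longrightarrow> s \<in> SD i"
    and optD: "\<forall>i<r. student_optimal_stable q P Pr (TD i) (SD i) (muD i)"
  shows "\<forall>i<r. \<forall>t\<in>TD i. weakly_prefers P t (muD i t) (muO t)"
proof (intro allI impI ballI)
  fix i t assume ir: "i < r" and tD: "t \<in> TD i"
  define nu where "nu = (\<lambda>x. if x \<in> TD i then muO x else None)"
  have stO: "stable q P Pr T S muO" using optO unfolding student_optimal_stable_def by blast
  have mO: "is_matching q T S muO" using stO unfolding stable_def by blast
  have TDsub: "TD i \<subseteq> T" using partT ir by blast
  have SDsub: "SD i \<subseteq> S" using partS ir by blast
  have asg: "assigned (TD i) nu s = assigned T muO s" if sS: "s \<in> SD i" for s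
  proof
    show "assigned (TD i) nu s \<subseteq> assigned T muO s"
      using TDsub unfolding assigned_def nu_def by auto
  next
    show "assigned T muO s \<subseteq> assigned (TD i) nu s"
    proof
      fix x assume "x \<in> assigned T muO s"
      hence xT: "x \<in> T" and xs: "muO x = Some s" unfolding assigned_def by auto
      then obtain j where jr: "j < r" and xj: "x \<in> TD j" using partT by blast
      have "s \<in> SD j" using closed jr xj xs by blast
      hence "j = i" using disjS jr ir sS by blast
      thus "x \<in> assigned (TD i) nu s" using xj xs unfolding assigned_def nu_def by auto
    qed
  qed
  have mnu: "is_matching q (TD i) (SD i) nu"
    unfolding is_matching_def
  proof (intro conjI)
    show "\<forall>t\<in>TD i. nu t = None \<or> (\<exists>s\<in>SD i. nu t = Some s)"
      using closed ir unfolding nu_def by (metis option.exhaust)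
    show "\<forall>t. t \<notin> TD i \<longrightarrow> nu t = None" unfolding nu_def by auto
    show "\<forall>s\<in>SD i. card (assigned (TD i) nu s) \<le> q"
      using asg mO SDsub unfolding is_matching_def by auto
  qed
  have "stable q P Pr (TD i) (SD i) nu"
    unfolding stable_def
  proof (intro conjI mnu notI)
    assume "\<exists>t s. t \<in> TD i \<and> s \<in> SD i \<and>
        ((nu t = None \<and> card (assigned (TD i) nu s) < q) \<or>
         (prefers P t (Some s) (nu t) \<and> (\<exists>t'\<in>assigned (TD i) nu s. Pr s t t')))"
    then obtain x s where x: "x \<in> TD i" and s: "s \<in> SD i" and
      b: "(nu x = None \<and> card (assigned (TD i) nu s) < q) \<or>
         (prefers P x (Some s) (nu x) \<and> (\<exists>t'\<in>assigned (TD i) nu s. Pr s x t'))" by blast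
    have "nu x = muO x" using x unfolding nu_def by simp
    hence "(muO x = None \<and> card (assigned T muO s) < q) \<or>
         (prefers P x (Some s) (muO x) \<and> (\<exists>t'\<in>assigned T muO s. Pr s x t'))"
      using b asg[OF s] by simp
    moreover have "x \<in> T" "s \<in> S" using x s TDsub SDsub by auto
    ultimately show False using stO unfolding stable_def by blast
  qed
  hence "weakly_prefers P t (muD i t) (nu t)"
    using optD ir tD unfolding student_optimal_stable_def by blast
  thus "weakly_prefers P t (muD i t) (muO t)" using tD unfolding nu_def by simp
qed

end
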